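(* Let $(X,\varphi)$ be a Smale space, $(Y,f)$ a finitely presented system, and $\pi:X\to Y$ an almost one-to-one $u$-resolving factor map. Let $P\subseteq Y$ be a finite set of synchronizing periodic points such that $\pi^{-1}(p)$ is a single point for each $p\in P$, and let $Q=\pi^{-1}(P)$. Then for each $y\in Y^u(P)$, $\pi^{-1}(y)=\{x\}$ for some $x\in X^u(Q)$ (i.e. $y$ has a unique preimage under $\pi:X\to Y$, and it lies in $X^u(Q)$).
   Context: Dynamical systems are compact metric spaces with homeomorphisms. Expansive: some $\varepsilon_X>0$ with $d(\varphi^nx,\varphi^ny)\le\varepsilon_X$ for all $n\in\mathbb{Z}$ implying $x=y$. A Smale space is a system equipped with a bracket map satisfying Ruelle's axioms; a finitely presented system is an expansive factor of a shift of finite type. Factor map: continuous surjection intertwining the homeomorphisms. $x\sim_u y$ iff $d(\varphi^{-n}x,\varphi^{-n}y)\to0$ as $n\to\infty$; $X^u(x)$ is the class of $x$ and $X^u(P)=\bigcup_{p\in P}X^u(p)$. $\pi$ is $u$-resolving if it is injective on each $X^u(x)$, almost one-to-one if a residual set of points has a unique preimage. A point $y$ is synchronizing if it has a local product neighbourhood: for some $\delta>0$ the bracket ($[a,b]$ = unique point of $Y^s(a,\varepsilon)\cap Y^u(b,\varepsilon)$, where $Y^s(a,\varepsilon)=\{z:d(f^na,f^nz)<\varepsilon\ \forall n\ge0\}$ and $Y^u$ likewise with $f^{-n}$) maps $Y^u(y,\delta)\times Y^s(y,\delta)$ homeomorphically onto an open neighbourhood of $y$. *)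

theory Defs
  imports "HOL-Analysis.Analysis"
begin

definition dyn_sys :: "'a::metric_space set \<Rightarrow> ('a \<Rightarrow> 'a) \<Rightarrow> bool" where
  "dyn_sys X phi \<longleftrightarrow> compact X \<and> (\<exists>g. homeomorphism X X phi g)"

definition finv :: "'a set \<Rightarrow> ('a \<Rightarrow> 'a) \<Rightarrow> 'a \<Rightarrow> 'a" where
  "finv X phi = inv_into X phi"

definition expansive :: "'a::metric_space set \<Rightarrow> ('a \<Rightarrow> 'a) \<Rightarrow> bool" where
  "expansive X phi \<longleftrightarrow> (\<exists>e>0. \<forall>x\<in>X. \<forall>y\<in>X.
     (\<forall>n::nat. dist ((phi ^^ n) x) ((phi ^^ n) y) \<le> e
             \<and> dist ((finv X phi ^^ n) x) ((finv X phi ^^ n) y) \<le> e) \<longrightarrow> x = y)"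

text \<open>Smale space: Ruelle's axioms for a partially defined bracket (Putnam's presentation).\<close>
definition smale_space :: "'a::metric_space set \<Rightarrow> ('a \<Rightarrow> 'a) \<Rightarrow> bool" where
  "smale_space X phi \<longleftrightarrow> dyn_sys X phi \<and>
    (\<exists>eps>0. \<exists>lam. 0 < lam \<and> lam < 1 \<and> (\<exists>br :: 'a \<Rightarrow> 'a \<Rightarrow> 'a.
      continuous_on {(x, y). x \<in> X \<and> y \<in> X \<and> dist x y \<le> eps} (\<lambda>(x, y). br x y) \<and>
      (\<forall>x\<in>X. \<forall>y\<in>X. dist x y \<le> eps \<longrightarrow> br x y \<in> X) \<and>
      (\<forall>x\<in>X. br x x = x) \<and>
      (\<forall>x\<in>X. \<forall>y\<in>X. \<forall>z\<in>X. dist x y \<le> eps \<longrightarrow> dist y z \<le> eps \<longrightarrow> dist x z \<le> eps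
          \<longrightarrow> dist x (br y z) \<le> eps \<longrightarrow> br x (br y z) = br x z) \<and>
      (\<forall>x\<in>X. \<forall>y\<in>X. \<forall>z\<in>X. dist x y \<le> eps \<longrightarrow> dist y z \<le> eps \<longrightarrow> dist x z \<le> eps
          \<longrightarrow> dist (br x y) z \<le> eps \<longrightarrow> br (br x y) z = br x z) \<and>
      (\<forall>x\<in>X. \<forall>y\<in>X. dist x y \<le> eps \<longrightarrow> dist (phi x) (phi y) \<le> eps
          \<longrightarrow> phi (br x y) = br (phi x) (phi y)) \<and>
      (\<forall>x\<in>X. \<forall>y\<in>X. dist x y \<le> eps \<longrightarrow> br x y = y
          \<longrightarrow> dist (phi x) (phi y) \<le> lam * dist x y) \<and>
      (\<forall>x\<in>X. \<forall>y\<in>X. dist x y \<le> eps \<longrightarrow> br x y = x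
          \<longrightarrow> dist (finv X phi x) (finv X phi y) \<le> lam * dist x y)))"

definition sft :: "nat \<Rightarrow> nat \<Rightarrow> nat list set \<Rightarrow> (int \<Rightarrow> nat) set" where
  "sft n m W = {x. (\<forall>i. x i < n) \<and> (\<forall>i. map (\<lambda>k. x (i + int k)) [0..<m] \<in> W)}"

definition shift :: "(int \<Rightarrow> nat) \<Rightarrow> (int \<Rightarrow> nat)" where
  "shift x = (\<lambda>i. x (i + 1))"

definition shift_top :: "(int \<Rightarrow> nat) topology" where
  "shift_top = product_topology (\<lambda>_. discrete_topology UNIV) UNIV"

definition factor_map :: "'a::metric_space set \<Rightarrow> ('a \<Rightarrow> 'a) \<Rightarrow> 'b::metric_space set \<Rightarrow> ('b \<Rightarrow> 'b)
    \<Rightarrow> ('a \<Rightarrow> 'b) \<Rightarrow> bool" where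
  "factor_map X phi Y f \<pi> \<longleftrightarrow> continuous_on X \<pi> \<and> \<pi> ` X = Y \<and> (\<forall>x\<in>X. \<pi> (phi x) = f (\<pi> x))"

definition finitely_presented :: "'b::metric_space set \<Rightarrow> ('b \<Rightarrow> 'b) \<Rightarrow> bool" where
  "finitely_presented Y f \<longleftrightarrow> dyn_sys Y f \<and> expansive Y f \<and>
     (\<exists>n m W g. continuous_map (subtopology shift_top (sft n m W)) (top_of_set Y) g
        \<and> g ` sft n m W = Y \<and> (\<forall>x\<in>sft n m W. g (shift x) = f (g x)))"

definition unstable_rel :: "'a::metric_space set \<Rightarrow> ('a \<Rightarrow> 'a) \<Rightarrow> 'a \<Rightarrow> 'a \<Rightarrow> bool" where
  "unstable_rel X phi x y \<longleftrightarrow>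
     (\<lambda>n. dist ((finv X phi ^^ n) x) ((finv X phi ^^ n) y)) \<longlonglongrightarrow> 0"

definition unstable_set :: "'a::metric_space set \<Rightarrow> ('a \<Rightarrow> 'a) \<Rightarrow> 'a \<Rightarrow> 'a set" where
  "unstable_set X phi x = {y\<in>X. unstable_rel X phi x y}"

definition unstable_set_of :: "'a::metric_space set \<Rightarrow> ('a \<Rightarrow> 'a) \<Rightarrow> 'a set \<Rightarrow> 'a set" where
  "unstable_set_of X phi P = (\<Union>p\<in>P. unstable_set X phi p)"

definition u_resolving :: "'a::metric_space set \<Rightarrow> ('a \<Rightarrow> 'a) \<Rightarrow> ('a \<Rightarrow> 'b) \<Rightarrow> bool" where
  "u_resolving X phi \<pi> \<longleftrightarrow> (\<forall>x\<in>X. inj_on \<pi> (unstable_set X phi x))"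

definition residual_in :: "'b::metric_space set \<Rightarrow> 'b set \<Rightarrow> bool" where
  "residual_in Y S \<longleftrightarrow> (\<exists>U :: nat \<Rightarrow> 'b set.
     (\<forall>k. openin (top_of_set Y) (U k) \<and> Y \<subseteq> closure (U k)) \<and> Y \<inter> (\<Inter>k. U k) \<subseteq> S)"

definition almost_one_to_one :: "'a set \<Rightarrow> 'b::metric_space set \<Rightarrow> ('a \<Rightarrow> 'b) \<Rightarrow> bool" where
  "almost_one_to_one X Y \<pi> \<longleftrightarrow> residual_in Y {y\<in>Y. \<exists>!x. x \<in> X \<and> \<pi> x = y}"

definition loc_stable :: "'b::metric_space set \<Rightarrow> ('b \<Rightarrow> 'b) \<Rightarrow> 'b \<Rightarrow> real \<Rightarrow> 'b set" where
  "loc_stable Y f a e = {z\<in>Y. \<forall>n::nat. dist ((f ^^ n) a) ((f ^^ n) z) < e}"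

definition loc_unstable :: "'b::metric_space set \<Rightarrow> ('b \<Rightarrow> 'b) \<Rightarrow> 'b \<Rightarrow> real \<Rightarrow> 'b set" where
  "loc_unstable Y f a e = {z\<in>Y. \<forall>n::nat. dist ((finv Y f ^^ n) a) ((finv Y f ^^ n) z) < e}"

definition bracket :: "'b::metric_space set \<Rightarrow> ('b \<Rightarrow> 'b) \<Rightarrow> real \<Rightarrow> 'b \<Rightarrow> 'b \<Rightarrow> 'b" where
  "bracket Y f e a b = (THE z. z \<in> loc_stable Y f a e \<inter> loc_unstable Y f b e)"

definition synchronizing :: "'b::metric_space set \<Rightarrow> ('b \<Rightarrow> 'b) \<Rightarrow> 'b \<Rightarrow> bool" where
  "synchronizing Y f y \<longleftrightarrow> y \<in> Y \<and> (\<exists>e>0. \<exists>\<delta>>0.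
     (\<forall>a\<in>loc_unstable Y f y \<delta>. \<forall>b\<in>loc_stable Y f y \<delta>.
        \<exists>!z. z \<in> loc_stable Y f a e \<inter> loc_unstable Y f b e) \<and>
     (\<exists>U. openin (top_of_set Y) U \<and> y \<in> U \<and>
        (\<exists>g. homeomorphism (loc_unstable Y f y \<delta> \<times> loc_stable Y f y \<delta>) U
               (\<lambda>(a, b). bracket Y f e a b) g)))"

definition periodic_pt :: "'b set \<Rightarrow> ('b \<Rightarrow> 'b) \<Rightarrow> 'b \<Rightarrow> bool" where
  "periodic_pt Y f p \<longleftrightarrow> p \<in> Y \<and> (\<exists>n>0. (f ^^ n) p = p)"

end

theory Submission
  imports Defs "HOL-Library.Infinite_Set"
begin

lemma dyn_basic:
  assumes "dyn_sys X phi" "x \<in> X"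
  shows "finv X phi x \<in> X" "phi (finv X phi x) = x" "finv X phi (phi x) = x" "phi x \<in> X"
proof -
  from assms(1) obtain g where h: "homeomorphism X X phi g" unfolding dyn_sys_def by blast
  have im: "phi ` X = X" using h by (simp add: homeomorphism_def)
  have inj: "inj_on phi X" using h unfolding homeomorphism_def inj_on_def by metis
  show "finv X phi x \<in> X" unfolding finv_def using im assms(2) by (metis inv_into_into)
  show "phi (finv X phi x) = x" unfolding finv_def using im assms(2) by (metis f_inv_into_f)
  show "finv X phi (phi x) = x" unfolding finv_def using inj assms(2) by (metis inv_into_f_f)
  show "phi x \<in> X" using im assms(2) by blast
qed

lemma iter_in:
  assumes "dyn_sys X phi" "x \<in> X"
  shows "(finv X phi ^^ n) x \<in> X" "(phi ^^ n) x \<in> X"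
proof -
  show "(finv X phi ^^ n) x \<in> X"
    by (induction n) (simp_all add: assms(2) dyn_basic(1)[OF assms(1)])
  show "(phi ^^ n) x \<in> X"
    by (induction n) (simp_all add: assms(2) dyn_basic(4)[OF assms(1)])
qed

lemma iter_inv:
  assumes "dyn_sys X phi" "x \<in> X"
  shows "(finv X phi ^^ n) ((phi ^^ n) x) = x" "(phi ^^ n) ((finv X phi ^^ n) x) = x"
proof -
  show "(finv X phi ^^ n) ((phi ^^ n) x) = x"
    using assms(2)
  proof (induction n arbitrary: x)
    case (Suc n)
    have "(finv X phi ^^ Suc n) ((phi ^^ Suc n) x) = (finv X phi ^^ n) (finv X phi (phi ((phi ^^ n) x)))"
      by (subst funpow_Suc_right) simp
    also have "\<dots> = x" using Suc iter_in[OF assms(1) Suc.prems] dyn_basic[OF assms(1)] by simp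
    finally show ?case .
  qed simp
  show "(phi ^^ n) ((finv X phi ^^ n) x) = x"
    using assms(2)
  proof (induction n arbitrary: x)
    case (Suc n)
    have "(phi ^^ Suc n) ((finv X phi ^^ Suc n) x) = phi ((phi ^^ n) ((finv X phi ^^ n) (finv X phi x)))"
      by (subst (2) funpow_Suc_right) simp
    also have "\<dots> = x" using Suc dyn_basic[OF assms(1) Suc.prems] by simp
    finally show ?case .
  qed simp
qed

lemma factor_inv:
  assumes "dyn_sys X phi" "dyn_sys Y f" "factor_map X phi Y f \<pi>" "x \<in> X"
  shows "\<pi> ((finv X phi ^^ n) x) = (finv Y f ^^ n) (\<pi> x)" "\<pi> ((phi ^^ n) x) = (f ^^ n) (\<pi> x)"
proof -
  have fm: "\<pi> ` X = Y" "\<forall>x\<in>X. \<pi> (phi x) = f (\<pi> x)" using assms(3) unfolding factor_map_def by auto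
  have one: "\<pi> (finv X phi z) = finv Y f (\<pi> z)" if "z \<in> X" for z
  proof -
    let ?w = "finv X phi z"
    have w: "?w \<in> X" "phi ?w = z" using dyn_basic[OF assms(1) that] by auto
    have "\<pi> z = f (\<pi> ?w)" using fm w by metis
    moreover have "\<pi> ?w \<in> Y" using fm w by blast
    ultimately show ?thesis using dyn_basic(3)[OF assms(2)] by metis
  qed
  show "\<pi> ((finv X phi ^^ n) x) = (finv Y f ^^ n) (\<pi> x)"
    by (induction n) (auto simp: one iter_in[OF assms(1) assms(4)])
  show "\<pi> ((phi ^^ n) x) = (f ^^ n) (\<pi> x)"
    by (induction n) (auto simp: fm iter_in[OF assms(1) assms(4)])
qed

lemma periodic_inv:
  fixes g :: "'a \<Rightarrow> 'a"
  assumes "(g ^^ N) p = p"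
  shows "(g ^^ m) p = (g ^^ (m mod N)) p"
proof -
  have k: "(g ^^ (k * N)) p = p" for k
    by (induction k) (auto simp: funpow_add assms)
  have "(g ^^ m) p = (g ^^ (m mod N + (m div N) * N)) p" by simp
  also have "\<dots> = (g ^^ (m mod N)) p" by (simp only: funpow_add comp_def k)
  finally show ?thesis .
qed

lemma key:
  fixes X :: "'a::metric_space set" and Y :: "'b::metric_space set"
  assumes dX: "dyn_sys X phi" and dY: "dyn_sys Y f" and fm: "factor_map X phi Y f \<pi>"
    and pY: "p \<in> Y" and fib: "{x'\<in>X. \<pi> x' = p} = {q}" and per: "(f ^^ N) p = p" "N > 0"
    and xX: "x \<in> X" and ur: "unstable_rel Y f p (\<pi> x)"
  shows "unstable_rel X phi q x"
proof (rule ccontr)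
  let ?s = "finv X phi" and ?g = "finv Y f"
  have qX: "q \<in> X" and pq: "\<pi> q = p" using fib by auto
  have cont: "continuous_on X \<pi>" using fm unfolding factor_map_def by auto
  have cX: "compact X" using dX unfolding dyn_sys_def by auto
  have gNp: "(?g ^^ N) p = p" using iter_inv(1)[OF dY pY, of N] per by simp
  have sNq: "(?s ^^ N) q = q"
  proof -
    have "\<pi> ((?s ^^ N) q) = p" using factor_inv(1)[OF dX dY fm qX] pq gNp by simp
    then show ?thesis using fib iter_in(1)[OF dX qX, of N] by blast
  qed
  define F where "F = (\<lambda>r. (?s ^^ r) q) ` {..<N}"
  have Fc: "closed F" unfolding F_def by (rule finite_imp_closed) simp
  have inF: "(?s ^^ m) q \<in> F" for m
    using periodic_inv[OF sNq, of m] per(2) unfolding F_def by auto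
  define D where "D = (\<lambda>m. dist ((?s ^^ m) q) ((?s ^^ m) x))"
  assume "\<not> unstable_rel X phi q x"
  hence "\<not> (D \<longlonglongrightarrow> 0)" unfolding unstable_rel_def D_def .
  then obtain e where e: "e > 0" "\<not> eventually (\<lambda>m. dist (D m) 0 < e) sequentially"
    unfolding tendsto_iff by blast
  hence "frequently (\<lambda>m. e \<le> D m) sequentially"
    unfolding frequently_def by (simp add: not_less not_le D_def)
  hence "infinite {m. e \<le> D m}" 
    by (simp only: cofinite_eq_sequentially[symmetric] frequently_cofinite not_False_eq_True)
  from infinite_enumerate[OF this] obtain s :: "nat \<Rightarrow> nat"
    where s0: "strict_mono s \<and> (\<forall>n. s n \<in> {m. e \<le> D m})" ..
  have s: "strict_mono s" "\<And>n. e \<le> D (s n)" using s0 by auto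
  define h where "h = (\<lambda>n. ((?s ^^ s n) x, (?s ^^ s n) q))"
  have "\<forall>n. h n \<in> X \<times> X" unfolding h_def using iter_in[OF dX] xX qX by auto
  moreover have "seq_compact (X \<times> X)" by (rule compact_imp_seq_compact) (simp add: compact_Times cX)
  ultimately obtain l t where lt: "l \<in> X \<times> X" "strict_mono t" "(h \<circ> t) \<longlonglongrightarrow> l"
    using seq_compactE by metis
  obtain a b where ab: "l = (a, b)" by (cases l)
  have aX: "a \<in> X" and bX: "b \<in> X" using lt ab by auto
  define u where "u = s \<circ> t"
  have u: "strict_mono u" unfolding u_def using s(1) lt(2) by (simp add: strict_mono_o)
  have ta: "(\<lambda>n. (?s ^^ u n) x) \<longlonglongrightarrow> a"
    using tendsto_fst[OF lt(3)] ab unfolding h_def u_def by (simp add: comp_def)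
  have tb: "(\<lambda>n. (?s ^^ u n) q) \<longlonglongrightarrow> b"
    using tendsto_snd[OF lt(3)] ab unfolding h_def u_def by (simp add: comp_def)
  have bF: "b \<in> F"
    using Fc tb inF unfolding closed_sequential_limits by (metis (no_types, lifting))
  then obtain r where r: "r < N" "b = (?s ^^ r) q" unfolding F_def by auto
  have pa: "(\<lambda>n. \<pi> ((?s ^^ u n) x)) \<longlonglongrightarrow> \<pi> a"
    using continuous_on_tendsto_compose[OF cont ta aX] iter_in(1)[OF dX xX] by simp
  have pb: "(\<lambda>n. \<pi> ((?s ^^ u n) q)) \<longlonglongrightarrow> \<pi> b"
    using continuous_on_tendsto_compose[OF cont tb bX] iter_in(1)[OF dX qX] by simp
  have "(\<lambda>n. dist (\<pi> ((?s ^^ u n) q)) (\<pi> ((?s ^^ u n) x))) \<longlonglongrightarrow> dist (\<pi> b) (\<pi> a)"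
    by (rule tendsto_dist[OF pb pa])
  moreover have "(\<lambda>n. dist (\<pi> ((?s ^^ u n) q)) (\<pi> ((?s ^^ u n) x))) \<longlonglongrightarrow> 0"
  proof -
    have "(\<lambda>m. dist ((?g ^^ m) p) ((?g ^^ m) (\<pi> x))) \<longlonglongrightarrow> 0"
      using ur unfolding unstable_rel_def .
    from LIMSEQ_subseq_LIMSEQ[OF this u] show ?thesis
      using factor_inv(1)[OF dX dY fm xX] factor_inv(1)[OF dX dY fm qX] pq by (simp add: comp_def)
  qed
  ultimately have "dist (\<pi> b) (\<pi> a) = 0" using LIMSEQ_unique by blast
  hence pab: "\<pi> a = \<pi> b" by simp
  have "\<pi> ((phi ^^ r) a) = (f ^^ r) (\<pi> b)" using factor_inv(2)[OF dX dY fm aX] pab by simp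
  also have "\<pi> b = (?g ^^ r) p" using r factor_inv(1)[OF dX dY fm qX] pq by simp
  also have "(f ^^ r) ((?g ^^ r) p) = p" using iter_inv(2)[OF dY pY] by simp
  finally have "(phi ^^ r) a = q" using fib iter_in(2)[OF dX aX, of r] by blast
  hence "a = (?s ^^ r) q" using iter_inv(1)[OF dX aX, of r] by simp
  hence ab_eq: "a = b" using r by simp
  have "(\<lambda>n. D (u n)) \<longlonglongrightarrow> dist b a" unfolding D_def by (rule tendsto_dist[OF tb ta])
  moreover have "\<forall>n. e \<le> D (u n)" using s(2) unfolding u_def by simp
  ultimately have "e \<le> dist b a" using LIMSEQ_le_const by blast
  thus False using ab_eq e(1) by simp
qed

theorem mainTheorem3:
  fixes X :: "'a::metric_space set" and phi :: "'a \<Rightarrow> 'a"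
    and Y :: "'b::metric_space set" and f :: "'b \<Rightarrow> 'b"
    and \<pi> :: "'a \<Rightarrow> 'b" and P :: "'b set"
  assumes "smale_space X phi"
    and "finitely_presented Y f"
    and "factor_map X phi Y f \<pi>"
    and "almost_one_to_one X Y \<pi>"
    and "u_resolving X phi \<pi>"
    and "finite P" and "P \<subseteq> Y"
    and "\<forall>p\<in>P. synchronizing Y f p \<and> periodic_pt Y f p"
    and "\<forall>p\<in>P. \<exists>x. {x'\<in>X. \<pi> x' = p} = {x}"
  shows "\<forall>y\<in>unstable_set_of Y f P.
           \<exists>x\<in>unstable_set_of X phi {x\<in>X. \<pi> x \<in> P}. {x'\<in>X. \<pi> x' = y} = {x}"
proof
  fix y assume "y \<in> unstable_set_of Y f P"
  then obtain p where p: "p \<in> P" "y \<in> Y" "unstable_rel Y f p y"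
    unfolding unstable_set_of_def unstable_set_def by auto
  have dX: "dyn_sys X phi" using assms(1) unfolding smale_space_def by auto
  have dY: "dyn_sys Y f" using assms(2) unfolding finitely_presented_def by auto
  obtain q where fib: "{x'\<in>X. \<pi> x' = p} = {q}" using assms(9) p(1) by blast
  obtain N where per: "N > 0" "(f ^^ N) p = p"
    using assms(8) p(1) unfolding periodic_pt_def by blast
  have pY: "p \<in> Y" using assms(7) p(1) by blast
  have qX: "q \<in> X" "\<pi> q \<in> P" using fib p(1) by auto
  have im: "\<pi> ` X = Y" using assms(3) unfolding factor_map_def by auto
  then obtain x where x: "x \<in> X" "\<pi> x = y" using p(2) by blast
  have all: "x' \<in> unstable_set X phi q" if "x' \<in> X" "\<pi> x' = y" for x'
    using key[OF dX dY assms(3) pY fib per(2) per(1) that(1)] p(3) that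
    unfolding unstable_set_def by simp
  have inj: "inj_on \<pi> (unstable_set X phi q)" using assms(5) qX unfolding u_resolving_def by blast
  have "{x'\<in>X. \<pi> x' = y} = {x}"
    using all x inj unfolding inj_on_def by blast
  moreover have "x \<in> unstable_set_of X phi {x\<in>X. \<pi> x \<in> P}"
    unfolding unstable_set_of_def using all[OF x] qX by blast
  ultimately show "\<exists>x\<in>unstable_set_of X phi {x\<in>X. \<pi> x \<in> P}. {x'\<in>X. \<pi> x' = y} = {x}"
    by blast
qed

end
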